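(* Let $d\ge2$ and let $\mathcal{H}$ be a $d$-uniform simple hypergraph such that any two distinct edges $S,S'$ with $S\cap S'\neq\emptyset$ satisfy $|S\cap S'|=d-1$. Let $x$ be a simplicial vertex of $\mathcal{H}$ and $S$ an edge of $\mathcal{H}$ containing $x$. If $\mathcal{S}$ is an induced matching in $\mathcal{H}\setminus S$, then $\mathcal{S}$ is an induced matching in $\mathcal{H}$. In particular, if $\mathcal{S}$ is a self disjoint set in $\mathcal{H}\setminus S$, then $\mathcal{S}$ is a self disjoint set in $\mathcal{H}$.
   Context: A simple hypergraph $\mathcal{H}$ is a set $\mathcal{E}(\mathcal{H})$ of subsets (edges) of a finite vertex set, each of cardinality at least $2$, none contained in another; $d$-uniform means all edges have cardinality $d$. $\mathcal{H}\setminus S$ is the hypergraph with the same vertex set and edge set $\mathcal{E}(\mathcal{H})\setminus\{S\}$. For a vertex $x$, $N[x]=\{x\}\cup\{y:\{x,y\}\subseteq E\text{ for some edge }E\}$; $x$ is simplicial if every $d$-subset of $N[x]$ is an edge. A family $\mathcal{S}=\{S_1,\dots,S_i\}$ of distinct edges is an induced matching if the $S_\ell$ are pairwise disjoint and no edge outside $\mathcal{S}$ is contained in $\bigcup_\ell S_\ell$. $\mathcal{S}$ is a self disjoint set if (i) for all $k$, $S_k\nsubseteq\bigcup_{\ell\neq k}S_\ell$, and (ii) there is an induced matching $\mathcal{S}_0\subseteq\mathcal{S}$ such that for every $S_\ell\in\mathcal{S}\setminus\mathcal{S}_0$ there is $S'\in\mathcal{S}_0$ with $|S_\ell\setminus S'|=1$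 (all notions relative to the ambient hypergraph). *)

theory Defs
  imports Main
begin

definition simple_hypergraph :: "'a set \<Rightarrow> 'a set set \<Rightarrow> bool" where
  "simple_hypergraph V E \<longleftrightarrow> finite V \<and> (\<forall>e\<in>E. e \<subseteq> V \<and> card e \<ge> 2)
     \<and> (\<forall>e\<in>E. \<forall>e'\<in>E. e \<subseteq> e' \<longrightarrow> e = e')"

definition uniform :: "nat \<Rightarrow> 'a set set \<Rightarrow> bool" where
  "uniform d E \<longleftrightarrow> (\<forall>e\<in>E. card e = d)"

definition del_edge :: "'a set set \<Rightarrow> 'a set \<Rightarrow> 'a set set" where
  "del_edge E S = E - {S}"

definition closed_nbhd :: "'a set set \<Rightarrow> 'a \<Rightarrow> 'a set" where
  "closed_nbhd E x = {x} \<union> {y. \<exists>e\<in>E. {x, y} \<subseteq> e}"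

definition simplicial :: "nat \<Rightarrow> 'a set set \<Rightarrow> 'a \<Rightarrow> bool" where
  "simplicial d E x \<longleftrightarrow> (\<forall>T. T \<subseteq> closed_nbhd E x \<and> card T = d \<longrightarrow> T \<in> E)"

definition induced_matching :: "'a set set \<Rightarrow> 'a set set \<Rightarrow> bool" where
  "induced_matching E \<S> \<longleftrightarrow> \<S> \<subseteq> E
     \<and> (\<forall>A\<in>\<S>. \<forall>B\<in>\<S>. A \<noteq> B \<longrightarrow> A \<inter> B = {})
     \<and> (\<forall>e\<in>E. e \<subseteq> \<Union>\<S> \<longrightarrow> e \<in> \<S>)"

definition self_disjoint :: "'a set set \<Rightarrow> 'a set set \<Rightarrow> bool" where
  "self_disjoint E \<S> \<longleftrightarrow> \<S> \<subseteq> E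
     \<and> (\<forall>A\<in>\<S>. \<not> A \<subseteq> \<Union>(\<S> - {A}))
     \<and> (\<exists>\<S>0 \<subseteq> \<S>. induced_matching E \<S>0
          \<and> (\<forall>A\<in>\<S> - \<S>0. \<exists>B\<in>\<S>0. card (A - B) = 1))"

end

theory Submission
  imports Defs
begin

lemma im_part:
  fixes V :: "'a set" and E :: "'a set set" and d :: nat and x :: 'a and S :: "'a set"
  assumes "d \<ge> 2"
    and "simple_hypergraph V E"
    and "uniform d E"
    and "simplicial d E x"
    and "S \<in> E" and "x \<in> S"
    and im: "induced_matching (del_edge E S) \<S>"
  shows "induced_matching E \<S>"
proof -
  have sub: "\<S> \<subseteq> E - {S}" and dis: "\<forall>A\<in>\<S>. \<forall>B\<in>\<S>. A \<noteq> B \<longrightarrow> A \<inter> B = {}"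
    and cl: "\<forall>e\<in>E - {S}. e \<subseteq> \<Union>\<S> \<longrightarrow> e \<in> \<S>"
    using im unfolding induced_matching_def del_edge_def by auto
  have "\<not> S \<subseteq> \<Union>\<S>"
  proof
    assume SU: "S \<subseteq> \<Union>\<S>"
    then obtain A where A: "A \<in> \<S>" "x \<in> A" using \<open>x \<in> S\<close> by auto
    have AE: "A \<in> E" "A \<noteq> S" using A sub by auto
    have cA: "card A = d" "card S = d" using assms(3) AE \<open>S \<in> E\<close> unfolding uniform_def by auto
    have fA: "finite A" using cA assms(1) by (metis card.infinite not_numeral_le_zero le_zero_eq)
    have "\<not> S \<subseteq> A" using assms(2) AE \<open>S \<in> E\<close> unfolding simple_hypergraph_def by auto
    then obtain y where y: "y \<in> S" "y \<notin> A" by auto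
    define T where "T = insert y (A - {x})"
    have cT: "card T = d" unfolding T_def using fA y A cA assms(1) by (simp add: card_Diff_singleton)
    have "T \<subseteq> closed_nbhd E x" unfolding T_def closed_nbhd_def
      using A AE y \<open>x \<in> S\<close> \<open>S \<in> E\<close> by blast
    hence TE: "T \<in> E" using assms(4) cT unfolding simplicial_def by auto
    have "T \<noteq> S" unfolding T_def using \<open>x \<in> S\<close> y A by auto
    moreover have "T \<subseteq> \<Union>\<S>" unfolding T_def using A SU y by auto
    ultimately have "T \<in> \<S>" using cl TE by auto
    moreover have "T \<noteq> A" unfolding T_def using y by auto
    ultimately have "T \<inter> A = {}" using dis A by auto
    moreover have "A - {x} \<noteq> {}"
    proof
      assume "A - {x} = {}"
      hence "A \<subseteq> {x}" by auto
      hence "card A \<le> card {x}" by (intro card_mono) auto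
      thus False using cA assms(1) by simp
    qed
    ultimately show False unfolding T_def by auto
  qed
  then show ?thesis using sub dis cl unfolding induced_matching_def by auto
qed

theorem lemma3p3:
  fixes V :: "'a set" and E :: "'a set set" and d :: nat and x :: 'a and S :: "'a set"
  assumes "d \<ge> 2"
    and "simple_hypergraph V E"
    and "uniform d E"
    and "\<forall>A\<in>E. \<forall>B\<in>E. A \<noteq> B \<and> A \<inter> B \<noteq> {} \<longrightarrow> card (A \<inter> B) = d - 1"
    and "x \<in> V"
    and "simplicial d E x"
    and "S \<in> E" and "x \<in> S"
  shows "(\<forall>\<S>. induced_matching (del_edge E S) \<S> \<longrightarrow> induced_matching E \<S>)
       \<and> (\<forall>\<S>. self_disjoint (del_edge E S) \<S> \<longrightarrow> self_disjoint E \<S>)"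
proof -
  have P1: "\<forall>\<S>. induced_matching (del_edge E S) \<S> \<longrightarrow> induced_matching E \<S>"
    using im_part[OF assms(1,2,3,6,7,8)] by blast
  have "\<forall>\<S>. self_disjoint (del_edge E S) \<S> \<longrightarrow> self_disjoint E \<S>"
  proof (intro allI impI)
    fix \<S> assume "self_disjoint (del_edge E S) \<S>"
    then show "self_disjoint E \<S>" using P1 unfolding self_disjoint_def del_edge_def
      by blast
  qed
  with P1 show ?thesis by blast
qed

end
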